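(* Let $F$ be an algebraically closed field, $R$ an $F$-algebra, $\sigma$ an $F$-algebra automorphism of $R$, $\delta$ a $\sigma$-derivation of $R$, and $T=R[x;\sigma,\delta]$. Let $\mathfrak m$ be an ideal of $R$ with $R/\mathfrak m\cong F$, and suppose that $\sigma(\mathfrak m)\neq\mathfrak m$ and $\delta(\mathfrak m\cap\sigma^{-1}(\mathfrak m))\subseteq\mathfrak m$. Then there is a unique ideal $M$ of $T$ such that $M\cap R=\mathfrak m$. Moreover, $T/M\cong F$.
   Context: A $\sigma$-derivation is an $F$-linear map $\delta$ with $\delta(ab)=\delta(a)b+\sigma(a)\delta(b)$; $R[x;\sigma,\delta]$ is the algebra generated by $R$ and $x$ with $xr-\sigma(r)x=\delta(r)$ for $r\in R$. *)

theory Defs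
  imports "HOL-Computational_Algebra.Polynomial"
begin

definition two_sided_ideal :: "'a::ring_1 set \<Rightarrow> bool" where
  "two_sided_ideal I \<longleftrightarrow> 0 \<in> I \<and> (\<forall>a\<in>I. \<forall>b\<in>I. a + b \<in> I) \<and> (\<forall>a\<in>I. - a \<in> I)
     \<and> (\<forall>a\<in>I. \<forall>r. r * a \<in> I \<and> a * r \<in> I)"

definition ring_hom1 :: "('a::ring_1 \<Rightarrow> 'b::ring_1) \<Rightarrow> bool" where
  "ring_hom1 h \<longleftrightarrow> h 1 = 1 \<and> (\<forall>a b. h (a + b) = h a + h b) \<and> (\<forall>a b. h (a * b) = h a * h b)"

definition F_algebra :: "('f::field \<Rightarrow> 'r::ring_1) \<Rightarrow> bool" where
  "F_algebra \<iota> \<longleftrightarrow> ring_hom1 \<iota> \<and> (\<forall>c r. \<iota> c * r = r * \<iota> c)"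

definition F_linear :: "('f::field \<Rightarrow> 'r::ring_1) \<Rightarrow> ('f \<Rightarrow> 's::ring_1) \<Rightarrow> ('r \<Rightarrow> 's) \<Rightarrow> bool" where
  "F_linear \<iota> \<kappa> h \<longleftrightarrow> (\<forall>a b. h (a + b) = h a + h b) \<and> (\<forall>c a. h (\<iota> c * a) = \<kappa> c * h a)"

definition F_alg_automorphism :: "('f::field \<Rightarrow> 'r::ring_1) \<Rightarrow> ('r \<Rightarrow> 'r) \<Rightarrow> bool" where
  "F_alg_automorphism \<iota> \<sigma> \<longleftrightarrow> ring_hom1 \<sigma> \<and> F_linear \<iota> \<iota> \<sigma> \<and> bij \<sigma>"

definition sigma_derivation :: "('f::field \<Rightarrow> 'r::ring_1) \<Rightarrow> ('r \<Rightarrow> 'r) \<Rightarrow> ('r \<Rightarrow> 'r) \<Rightarrow> bool" where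
  "sigma_derivation \<iota> \<sigma> \<delta> \<longleftrightarrow> F_linear \<iota> \<iota> \<delta> \<and> (\<forall>a b. \<delta> (a * b) = \<delta> a * b + \<sigma> a * \<delta> b)"

text \<open>T (with embedding j of R and element x) is the Ore extension R[x;\<sigma>,\<delta>]:
  j is an injective unital ring homomorphism, x r = \<sigma>(r) x + \<delta>(r), and T is a free left
  R-module with basis 1, x, x^2, ....\<close>
definition ore_extension ::
  "('r::ring_1 \<Rightarrow> 'r) \<Rightarrow> ('r \<Rightarrow> 'r) \<Rightarrow> ('r \<Rightarrow> 't::ring_1) \<Rightarrow> 't \<Rightarrow> bool" where
  "ore_extension \<sigma> \<delta> j x \<longleftrightarrow>
     ring_hom1 j \<and> inj j \<and>
     (\<forall>r. x * j r = j (\<sigma> r) * x + j (\<delta> r)) \<and>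
     (\<forall>t. \<exists>n a. t = (\<Sum>i<n. j (a i) * x ^ i)) \<and>
     (\<forall>n a. (\<Sum>i<n. j (a i) * x ^ i) = 0 \<longrightarrow> (\<forall>i<n. a i = 0))"

text \<open>For an F-algebra A (structure map \<iota>) and an ideal I of A, "A/I \<cong> F" as F-algebras,
  expressed via the first isomorphism theorem: there is an F-algebra homomorphism A \<rightarrow> F
  whose kernel is exactly I (such a map is automatically surjective, as it fixes F).\<close>
definition quotient_iso_F :: "('f::field \<Rightarrow> 'a::ring_1) \<Rightarrow> 'a set \<Rightarrow> bool" where
  "quotient_iso_F \<iota> I \<longleftrightarrow> (\<exists>\<phi> :: 'a \<Rightarrow> 'f. ring_hom1 \<phi> \<and> F_linear \<iota> id \<phi> \<and> {a. \<phi> a = 0} = I)"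

end

theory Submission
  imports Defs
begin

lemma rh_add: "ring_hom1 h \<Longrightarrow> h (a + b) = h a + h b" by (simp add: ring_hom1_def)
lemma rh_mult: "ring_hom1 h \<Longrightarrow> h (a * b) = h a * h b" by (simp add: ring_hom1_def)
lemma rh_one: "ring_hom1 h \<Longrightarrow> h 1 = 1" by (simp add: ring_hom1_def)
lemma rh_zero: "ring_hom1 h \<Longrightarrow> h 0 = 0"
proof -
  assume "ring_hom1 h"
  then have "h (0 + 0) = h 0 + h 0" by (rule rh_add)
  then show ?thesis by simp
qed
lemma rh_uminus: "ring_hom1 h \<Longrightarrow> h (- a) = - h a"
proof -
  assume h: "ring_hom1 h"
  have "h (- a + a) = h (- a) + h a" by (rule rh_add[OF h])
  then have "h (- a) + h a = 0" using rh_zero[OF h] by simp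
  then show ?thesis by (simp add: eq_neg_iff_add_eq_0)
qed
lemma rh_diff: "ring_hom1 h \<Longrightarrow> h (a - b) = h a - h b"
  using rh_add[of h a "- b"] rh_uminus[of h b] by simp
lemma rh_sum: "ring_hom1 h \<Longrightarrow> h (sum f A) = (\<Sum>i\<in>A. h (f i))"
  by (induction A rule: infinite_finite_induct) (auto simp: rh_zero rh_add)
lemma rh_power: "ring_hom1 h \<Longrightarrow> h (a ^ n) = h a ^ n"
  by (induction n) (auto simp: rh_one rh_mult)

lemma pad_sum: "(n::nat) \<le> N \<Longrightarrow> (\<Sum>i<n. f i) = (\<Sum>i<N. if i < n then f i else (0::'a::comm_monoid_add))"
proof -
  assume "n \<le> N"
  then have "{i \<in> {..<N}. i < n} = {..<n}" by (auto simp: less_le_trans)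
  then show ?thesis by (simp add: sum.inter_filter[symmetric])
qed

definition Phi :: "('r::ring_1 \<Rightarrow> 't::ring_1) \<Rightarrow> 't \<Rightarrow> ('r \<Rightarrow> 'f::field) \<Rightarrow> 'f \<Rightarrow> 't \<Rightarrow> 'f" where
  "Phi j x \<phi> lam t = (SOME v. \<exists>n a. t = (\<Sum>i<n. j (a i) * x ^ i) \<and> v = (\<Sum>i<n. \<phi> (a i) * lam ^ i))"

context
  fixes j :: "'r::ring_1 \<Rightarrow> 't::ring_1" and x :: 't and \<phi> :: "'r \<Rightarrow> 'f::field"
    and \<sigma> \<delta> :: "'r \<Rightarrow> 'r" and lam :: 'f
  assumes hj: "ring_hom1 j" and hphi: "ring_hom1 \<phi>"
    and hcomm: "\<And>r. x * j r = j (\<sigma> r) * x + j (\<delta> r)"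
    and hrep: "\<And>t. \<exists>n a. t = (\<Sum>i<n. j (a i) * x ^ i)"
    and huniq: "\<And>n a. (\<Sum>i<n. j (a i) * x ^ i) = 0 \<Longrightarrow> \<forall>i<n. a i = 0"
    and hkey: "\<And>r. \<phi> (\<delta> r) + lam * \<phi> (\<sigma> r) = lam * \<phi> r"
begin

lemma pad_rep: "n \<le> N \<Longrightarrow> (\<Sum>i<n. j (a i) * x ^ i) = (\<Sum>i<N. j (if i<n then a i else 0) * x ^ i)"
  by (subst pad_sum[of n N], simp, rule sum.cong, auto simp: rh_zero[OF hj])

lemma pad_val: "n \<le> N \<Longrightarrow> (\<Sum>i<n. \<phi> (a i) * lam ^ i) = (\<Sum>i<N. \<phi> (if i<n then a i else 0) * lam ^ i)"
  by (subst pad_sum[of n N], simp, rule sum.cong, auto simp: rh_zero[OF hphi])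

lemma repr_eq:
  assumes "(\<Sum>i<n. j (a i) * x ^ i) = (\<Sum>i<n'. j (b i) * x ^ i)"
  shows "(\<Sum>i<n. \<phi> (a i) * lam ^ i) = (\<Sum>i<n'. \<phi> (b i) * lam ^ i)"
proof -
  define N where "N = max n n'"
  define a' where "a' i = (if i<n then a i else 0)" for i
  define b' where "b' i = (if i<n' then b i else 0)" for i
  have A: "(\<Sum>i<n. j (a i) * x ^ i) = (\<Sum>i<N. j (a' i) * x ^ i)"
    unfolding a'_def N_def by (rule pad_rep) simp
  have B: "(\<Sum>i<n'. j (b i) * x ^ i) = (\<Sum>i<N. j (b' i) * x ^ i)"
    unfolding b'_def N_def by (rule pad_rep) simp
  have "(\<Sum>i<N. j (a' i - b' i) * x ^ i) = (\<Sum>i<N. j (a' i) * x ^ i) - (\<Sum>i<N. j (b' i) * x ^ i)"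
    by (simp add: rh_diff[OF hj] left_diff_distrib sum_subtractf)
  also have "\<dots> = 0" using A B assms by simp
  finally have "\<forall>i<N. a' i - b' i = 0" by (rule huniq)
  then have ab: "\<forall>i<N. a' i = b' i" by simp
  have "(\<Sum>i<n. \<phi> (a i) * lam ^ i) = (\<Sum>i<N. \<phi> (a' i) * lam ^ i)"
    unfolding a'_def N_def by (rule pad_val) simp
  also have "\<dots> = (\<Sum>i<N. \<phi> (b' i) * lam ^ i)" using ab by (intro sum.cong) auto
  also have "\<dots> = (\<Sum>i<n'. \<phi> (b i) * lam ^ i)"
    unfolding b'_def N_def by (rule pad_val[symmetric]) simp
  finally show ?thesis .
qed

lemma Phi_eval:
  assumes "t = (\<Sum>i<n. j (a i) * x ^ i)"
  shows "Phi j x \<phi> lam t = (\<Sum>i<n. \<phi> (a i) * lam ^ i)"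
proof -
  let ?P = "\<lambda>v. \<exists>n a. t = (\<Sum>i<n. j (a i) * x ^ i) \<and> v = (\<Sum>i<n. \<phi> (a i) * lam ^ i)"
  have "?P (\<Sum>i<n. \<phi> (a i) * lam ^ i)" using assms by blast
  then have "?P (SOME v. ?P v)" by (rule someI)
  then obtain n' a' where "t = (\<Sum>i<n'. j (a' i) * x ^ i)" and v: "(SOME v. ?P v) = (\<Sum>i<n'. \<phi> (a' i) * lam ^ i)"
    by blast
  then have "(\<Sum>i<n'. \<phi> (a' i) * lam ^ i) = (\<Sum>i<n. \<phi> (a i) * lam ^ i)"
    using assms by (intro repr_eq) simp
  then show ?thesis unfolding Phi_def using v by simp
qed

abbreviation "P \<equiv> Phi j x \<phi> lam"

lemma Phi_zero: "P 0 = 0"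
  using Phi_eval[where t=0 and n=0] by simp

lemma Phi_j: "P (j r) = \<phi> r"
  using Phi_eval[where t="j r" and n=1 and a="\<lambda>_. r"] by simp

lemma Phi_one: "P 1 = 1"
  using Phi_j[of 1] by (simp add: rh_one[OF hj] rh_one[OF hphi])

lemma Phi_add: "P (t + s) = P t + P s"
proof -
  obtain n a where t: "t = (\<Sum>i<n. j (a i) * x ^ i)" using hrep by blast
  obtain n' b where s: "s = (\<Sum>i<n'. j (b i) * x ^ i)" using hrep by blast
  define N where "N = max n n'"
  define a' where "a' i = (if i<n then a i else 0)" for i
  define b' where "b' i = (if i<n' then b i else 0)" for i
  have t': "t = (\<Sum>i<N. j (a' i) * x ^ i)" unfolding t a'_def N_def by (rule pad_rep) simp
  have s': "s = (\<Sum>i<N. j (b' i) * x ^ i)" unfolding s b'_def N_def by (rule pad_rep) simp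
  have "t + s = (\<Sum>i<N. j (a' i + b' i) * x ^ i)"
    unfolding t' s' by (simp add: rh_add[OF hj] distrib_right sum.distrib)
  then have "P (t + s) = (\<Sum>i<N. \<phi> (a' i + b' i) * lam ^ i)" by (rule Phi_eval)
  also have "\<dots> = (\<Sum>i<N. \<phi> (a' i) * lam ^ i) + (\<Sum>i<N. \<phi> (b' i) * lam ^ i)"
    by (simp add: rh_add[OF hphi] distrib_right sum.distrib)
  also have "\<dots> = P t + P s" using Phi_eval[OF t'] Phi_eval[OF s'] by simp
  finally show ?thesis .
qed

lemma Phi_sum: "P (sum f A) = (\<Sum>i\<in>A. P (f i))"
  by (induction A rule: infinite_finite_induct) (auto simp: Phi_zero Phi_add)

lemma Phi_left: "P (j r * t) = \<phi> r * P t"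
proof -
  obtain n a where t: "t = (\<Sum>i<n. j (a i) * x ^ i)" using hrep by blast
  have "j r * t = (\<Sum>i<n. j (r * a i) * x ^ i)"
    unfolding t by (simp add: sum_distrib_left rh_mult[OF hj] mult.assoc)
  then have "P (j r * t) = (\<Sum>i<n. \<phi> (r * a i) * lam ^ i)" by (rule Phi_eval)
  also have "\<dots> = \<phi> r * P t" unfolding Phi_eval[OF t]
    by (simp add: sum_distrib_left rh_mult[OF hphi] mult.assoc)
  finally show ?thesis .
qed

lemma Phi_right_x: "P (t * x) = P t * lam"
proof -
  obtain n a where t: "t = (\<Sum>i<n. j (a i) * x ^ i)" using hrep by blast
  define b where "b i = (case i of 0 \<Rightarrow> 0 | Suc k \<Rightarrow> a k)" for i
  have "t * x = (\<Sum>i<Suc n. j (b i) * x ^ i)"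
    unfolding t sum.lessThan_Suc_shift b_def
    by (simp add: sum_distrib_right rh_zero[OF hj] mult.assoc power_commutes)
  then have "P (t * x) = (\<Sum>i<Suc n. \<phi> (b i) * lam ^ i)" by (rule Phi_eval)
  also have "\<dots> = P t * lam" unfolding Phi_eval[OF t] sum.lessThan_Suc_shift b_def
    by (simp add: sum_distrib_right rh_zero[OF hphi] sum_distrib_left mult_ac)
  finally show ?thesis .
qed

lemma Phi_right_xpow: "P (t * x ^ i) = P t * lam ^ i"
proof (induction i arbitrary: t)
  case 0 then show ?case by simp
next
  case (Suc i)
  have "t * x ^ Suc i = (t * x) * x ^ i" by (simp add: mult.assoc power_commutes)
  then have "P (t * x ^ Suc i) = P (t * x) * lam ^ i" by (simp only: Suc)
  then show ?case by (simp add: Phi_right_x mult_ac)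
qed

lemma Phi_pow_j: "P (x ^ i * j r) = lam ^ i * \<phi> r"
proof (induction i arbitrary: r)
  case 0 then show ?case by (simp add: Phi_j)
next
  case (Suc i)
  have "x ^ Suc i * j r = (x ^ i * j (\<sigma> r)) * x + x ^ i * j (\<delta> r)"
    by (simp only: power_Suc2 mult.assoc hcomm distrib_left)
  then have "P (x ^ Suc i * j r) = lam ^ i * \<phi> (\<sigma> r) * lam + lam ^ i * \<phi> (\<delta> r)"
    by (simp add: Phi_add Phi_right_x Suc)
  also have "\<dots> = lam ^ i * (\<phi> (\<delta> r) + lam * \<phi> (\<sigma> r))" by (simp add: algebra_simps)
  also have "\<dots> = lam ^ Suc i * \<phi> r" by (simp add: hkey)
  finally show ?case .
qed

lemma Phi_right_j: "P (t * j r) = P t * \<phi> r"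
proof -
  obtain n a where t: "t = (\<Sum>i<n. j (a i) * x ^ i)" using hrep by blast
  have "t * j r = (\<Sum>i<n. j (a i) * (x ^ i * j r))"
    unfolding t by (simp add: sum_distrib_right mult.assoc)
  then have "P (t * j r) = (\<Sum>i<n. \<phi> (a i) * (lam ^ i * \<phi> r))"
    by (simp add: Phi_sum Phi_left Phi_pow_j)
  also have "\<dots> = P t * \<phi> r" unfolding Phi_eval[OF t]
    by (simp add: sum_distrib_right mult.assoc)
  finally show ?thesis .
qed

lemma Phi_mult: "P (t * s) = P t * P s"
proof -
  obtain n b where s: "s = (\<Sum>i<n. j (b i) * x ^ i)" using hrep by blast
  have "t * s = (\<Sum>i<n. (t * j (b i)) * x ^ i)"
    unfolding s by (simp add: sum_distrib_left mult.assoc)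
  then have "P (t * s) = (\<Sum>i<n. P t * \<phi> (b i) * lam ^ i)"
    by (simp add: Phi_sum Phi_right_xpow Phi_right_j)
  also have "\<dots> = P t * P s" unfolding Phi_eval[OF s]
    by (simp add: sum_distrib_left mult.assoc)
  finally show ?thesis .
qed

lemma Phi_hom: "ring_hom1 P"
  unfolding ring_hom1_def using Phi_one Phi_add Phi_mult by blast

lemma Phi_x: "P x = lam"
  using Phi_right_x[of 1] by (simp add: Phi_one)

end

theorem proposition4p3:
  fixes \<iota> :: "'f::alg_closed_field \<Rightarrow> 'r::ring_1"
    and \<sigma> \<delta> :: "'r \<Rightarrow> 'r"
    and j :: "'r \<Rightarrow> 't::ring_1" and x :: 't
    and m :: "'r set"
  assumes "F_algebra \<iota>"
    and "F_alg_automorphism \<iota> \<sigma>"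
    and "sigma_derivation \<iota> \<sigma> \<delta>"
    and "ore_extension \<sigma> \<delta> j x"
    and "two_sided_ideal m"
    and "quotient_iso_F \<iota> m"
    and "\<sigma> ` m \<noteq> m"
    and "\<delta> ` (m \<inter> \<sigma> -` m) \<subseteq> m"
  shows "(\<exists>!M. two_sided_ideal M \<and> j -` M = m)
       \<and> (\<forall>M. two_sided_ideal M \<and> j -` M = m \<longrightarrow> quotient_iso_F (j \<circ> \<iota>) M)"
proof -
  note A = assms
  have hiota: "ring_hom1 \<iota>" and iota_c: "\<And>c r. \<iota> c * r = r * \<iota> c"
    using A(1) unfolding F_algebra_def by auto
  have hsig: "ring_hom1 \<sigma>" and sig_lin: "\<And>c a. \<sigma> (\<iota> c * a) = \<iota> c * \<sigma> a" and sig_bij: "bij \<sigma>"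
    using A(2) unfolding F_alg_automorphism_def F_linear_def by auto
  have del_add: "\<And>a b. \<delta> (a + b) = \<delta> a + \<delta> b" and del_lin: "\<And>c a. \<delta> (\<iota> c * a) = \<iota> c * \<delta> a"
    and del_prod: "\<And>a b. \<delta> (a * b) = \<delta> a * b + \<sigma> a * \<delta> b"
    using A(3) unfolding sigma_derivation_def F_linear_def by auto
  have hj: "ring_hom1 j" and hcomm: "\<And>r. x * j r = j (\<sigma> r) * x + j (\<delta> r)"
    and hrep: "\<And>t. \<exists>n a. t = (\<Sum>i<n. j (a i) * x ^ i)"
    and huniq: "\<And>n a. (\<Sum>i<n. j (a i) * x ^ i) = 0 \<Longrightarrow> \<forall>i<n. a i = 0"
    using A(4) unfolding ore_extension_def by auto
  obtain \<phi> :: "'r \<Rightarrow> 'f" where hphi: "ring_hom1 \<phi>" and phi_lin: "\<And>c a. \<phi> (\<iota> c * a) = c * \<phi> a"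
    and mdef: "m = {a. \<phi> a = 0}"
    using A(6) unfolding quotient_iso_F_def F_linear_def by auto
  have phi_iota: "\<phi> (\<iota> c) = c" for c
    using phi_lin[of c 1] by (simp add: rh_one[OF hphi])
  have sig_iota: "\<sigma> (\<iota> c) = \<iota> c" for c
    using sig_lin[of c 1] by (simp add: rh_one[OF hsig])
  have del0: "\<delta> 0 = 0" using del_add[of 0 0] by simp
  have del_minus: "\<delta> (- a) = - \<delta> a" for a
    using del_add[of "-a" a] del0 by (simp add: eq_neg_iff_add_eq_0)
  have del_diff: "\<delta> (a - b) = \<delta> a - \<delta> b" for a b
    using del_add[of a "-b"] del_minus[of b] by simp
  have del1: "\<delta> 1 = 0" using del_prod[of 1 1] by (simp add: rh_one[OF hsig])
  have del_iota: "\<delta> (\<iota> c) = 0" for c using del_lin[of c 1] del1 by simp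
  have "\<exists>r. \<phi> (\<sigma> r) \<noteq> \<phi> r"
  proof (rule ccontr)
    assume "\<not> ?thesis"
    then have eq: "\<And>r. \<phi> (\<sigma> r) = \<phi> r" by auto
    have "\<sigma> ` m = m"
    proof
      show "\<sigma> ` m \<subseteq> m" using eq mdef by auto
      show "m \<subseteq> \<sigma> ` m"
      proof
        fix a assume a: "a \<in> m"
        have "a = \<sigma> (inv \<sigma> a)" using sig_bij by (simp add: bij_is_surj surj_f_inv_f)
        moreover have "inv \<sigma> a \<in> m" using a eq[of "inv \<sigma> a"] \<open>a = \<sigma> (inv \<sigma> a)\<close> mdef by auto
        ultimately show "a \<in> \<sigma> ` m" by blast
      qed
    qed
    then show False using A(7) by simp
  qed
  then obtain r1 where r1: "\<phi> (\<sigma> r1) \<noteq> \<phi> r1" by blast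
  define d where "d = \<phi> (\<sigma> r1) - \<phi> r1"
  have d0: "d \<noteq> 0" using r1 d_def by simp
  define r0 where "r0 = \<iota> (1 / d) * (r1 - \<iota> (\<phi> r1))"
  have r0a: "\<phi> r0 = 0" unfolding r0_def phi_lin by (simp add: rh_diff[OF hphi] phi_iota)
  have r0b: "\<phi> (\<sigma> r0) = 1" unfolding r0_def sig_lin
    by (simp add: rh_diff[OF hsig] sig_iota phi_lin rh_diff[OF hphi] phi_iota d0 flip: d_def)
  define lam where "lam = - \<phi> (\<delta> r0)"
  have hkey: "\<phi> (\<delta> r) + lam * \<phi> (\<sigma> r) = lam * \<phi> r" for r
  proof -
    define c where "c = \<phi> (\<sigma> r) - \<phi> r"
    define s where "s = r - \<iota> (\<phi> r) - \<iota> c * r0"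
    have s1: "\<phi> s = 0" unfolding s_def by (simp add: rh_diff[OF hphi] phi_iota phi_lin r0a)
    have s2: "\<phi> (\<sigma> s) = 0" unfolding s_def
      by (simp add: rh_diff[OF hsig] sig_iota sig_lin rh_diff[OF hphi] phi_iota phi_lin r0b c_def)
    have "s \<in> m \<inter> \<sigma> -` m" using s1 s2 mdef by auto
    then have "\<delta> s \<in> m" using A(8) by auto
    then have "\<phi> (\<delta> s) = 0" using mdef by auto
    moreover have "\<phi> (\<delta> s) = \<phi> (\<delta> r) + c * lam"
      unfolding s_def by (simp add: del_diff del_iota del_lin rh_diff[OF hphi] phi_lin lam_def)
    ultimately show ?thesis unfolding c_def by (simp add: algebra_simps)
  qed
  note facts = hj hphi hcomm hrep huniq hkey
  define P where "P = Phi j x \<phi> lam"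
  have Phom: "ring_hom1 P" unfolding P_def by (rule Phi_hom[OF facts])
  have Pj: "P (j r) = \<phi> r" for r unfolding P_def by (rule Phi_j[OF facts])
  have Px: "P x = lam" unfolding P_def by (rule Phi_x[OF facts])
  define e where "e c = j (\<iota> c)" for c
  have Pe: "P (e c) = c" for c unfolding e_def Pj phi_iota ..
  have ehom: "ring_hom1 e" using hj hiota unfolding e_def ring_hom1_def by auto
  define K where "K = {t. P t = 0}"
  have Kideal: "two_sided_ideal K"
    unfolding two_sided_ideal_def K_def
    by (simp add: rh_zero[OF Phom] rh_add[OF Phom] rh_uminus[OF Phom] rh_mult[OF Phom])
  have Kpre: "j -` K = m" unfolding K_def mdef by (auto simp: Pj)
  have Kiso: "quotient_iso_F (j \<circ> \<iota>) K"
    unfolding quotient_iso_F_def F_linear_def K_def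
    using Phom by (auto simp: rh_add[OF Phom] rh_mult[OF Phom] Pj phi_iota)
  have uniq: "M = K" if MI: "two_sided_ideal M" and Mpre: "j -` M = m" for M
  proof -
    have M0: "0 \<in> M" and Madd: "\<And>a b. a \<in> M \<Longrightarrow> b \<in> M \<Longrightarrow> a + b \<in> M"
      and Mneg: "\<And>a. a \<in> M \<Longrightarrow> - a \<in> M"
      and Mmul: "\<And>a r. a \<in> M \<Longrightarrow> r * a \<in> M" "\<And>a r. a \<in> M \<Longrightarrow> a * r \<in> M"
      using MI unfolding two_sided_ideal_def by auto
    have Mdiff: "a - b \<in> M" if "a \<in> M" "b \<in> M" for a b
      using Madd[OF that(1) Mneg[OF that(2)]] by simp
    have jM: "j r \<in> M \<longleftrightarrow> \<phi> r = 0" for r using Mpre mdef by auto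
    have xM: "x - e lam \<in> M"
    proof -
      have 1: "x * j r0 \<in> M" using jM r0a Mmul(1) by blast
      have 2: "j (\<sigma> r0 - 1) * x \<in> M"
        using jM[of "\<sigma> r0 - 1"] r0b Mmul(2) by (simp add: rh_diff[OF hphi] rh_one[OF hphi])
      have 3: "j (\<delta> r0 - \<iota> (- lam)) \<in> M"
        using jM[of "\<delta> r0 - \<iota> (- lam)"] by (simp add: rh_diff[OF hphi] phi_iota lam_def)
      have "x - e lam = x * j r0 - j (\<sigma> r0 - 1) * x - j (\<delta> r0 - \<iota> (- lam))"
        unfolding hcomm e_def
        by (simp add: rh_diff[OF hj] rh_add[OF hj] rh_one[OF hj] rh_uminus[OF hiota] rh_uminus[OF hj] algebra_simps)
      then show ?thesis using 1 2 3 Mdiff by simp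
    qed
    define S where "S = {t. t - e (P t) \<in> M}"
    have S0: "0 \<in> S" unfolding S_def using M0 by (simp add: rh_zero[OF Phom] rh_zero[OF ehom])
    have Sj: "j r \<in> S" for r
    proof -
      have "j r - e (P (j r)) = j (r - \<iota> (\<phi> r))" unfolding Pj e_def by (simp add: rh_diff[OF hj])
      moreover have "j (r - \<iota> (\<phi> r)) \<in> M" using jM by (simp add: rh_diff[OF hphi] phi_iota)
      ultimately show ?thesis unfolding S_def by simp
    qed
    have Sx: "x \<in> S" unfolding S_def using xM Px by simp
    have Sadd: "t + s \<in> S" if "t \<in> S" "s \<in> S" for t s
    proof -
      have eq: "t + s - e (P (t + s)) = (t - e (P t)) + (s - e (P s))"
        by (simp add: rh_add[OF Phom] rh_add[OF ehom])
      have "(t - e (P t)) + (s - e (P s)) \<in> M" using that Madd unfolding S_def by blast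
      then show ?thesis unfolding S_def mem_Collect_eq eq .
    qed
    have Smul: "t * s \<in> S" if "t \<in> S" "s \<in> S" for t s
    proof -
      have "t * s - e (P t) * e (P s) = t * (s - e (P s)) + (t - e (P t)) * e (P s)"
        by (simp add: algebra_simps)
      moreover have "e (P (t * s)) = e (P t) * e (P s)" by (simp add: rh_mult[OF Phom] rh_mult[OF ehom])
      ultimately have eq: "t * s - e (P (t * s)) = t * (s - e (P s)) + (t - e (P t)) * e (P s)" by simp
      have "t * (s - e (P s)) + (t - e (P t)) * e (P s) \<in> M"
        using that Madd Mmul unfolding S_def by blast
      then show ?thesis unfolding S_def mem_Collect_eq eq .
    qed
    have Spow: "x ^ i \<in> S" for i
    proof (induction i)
      case 0 show ?case using Sj[of 1] by (simp add: rh_one[OF hj])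
    next
      case (Suc i) show ?case unfolding power_Suc2 by (rule Smul[OF Suc Sx])
    qed
    have Ssum: "(\<Sum>i<n. j (a i) * x ^ i) \<in> S" for n a
    proof (induction n)
      case 0 show ?case using S0 by simp
    next
      case (Suc n) show ?case unfolding sum.lessThan_Suc by (rule Sadd[OF Suc Smul[OF Sj Spow]])
    qed
    have Sall: "t \<in> S" for t using hrep[of t] Ssum by auto
    show "M = K"
    proof
      show "K \<subseteq> M"
      proof
        fix t assume "t \<in> K"
        then show "t \<in> M" using Sall[of t] unfolding S_def K_def by (simp add: rh_zero[OF ehom])
      qed
      show "M \<subseteq> K"
      proof
        fix t assume t: "t \<in> M"
        have "t - e (P t) \<in> M" using Sall[of t] unfolding S_def by simp
        then have "t - (t - e (P t)) \<in> M" by (rule Mdiff[OF t])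
        then have "e (P t) \<in> M" by simp
        then have "\<phi> (\<iota> (P t)) = 0" using jM unfolding e_def by blast
        then show "t \<in> K" unfolding K_def phi_iota by simp
      qed
    qed
  qed
  show ?thesis
  proof
    show "\<exists>!M. two_sided_ideal M \<and> j -` M = m"
    proof (rule ex1I[of _ K])
      show "two_sided_ideal K \<and> j -` K = m" using Kideal Kpre by simp
      fix M assume "two_sided_ideal M \<and> j -` M = m"
      then show "M = K" by (intro uniq) simp_all
    qed
    show "\<forall>M. two_sided_ideal M \<and> j -` M = m \<longrightarrow> quotient_iso_F (j \<circ> \<iota>) M"
    proof (intro allI impI)
      fix M assume "two_sided_ideal M \<and> j -` M = m"
      then have "M = K" by (intro uniq) simp_all
      then show "quotient_iso_F (j \<circ> \<iota>) M" using Kiso by simp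
    qed
  qed
qed

end
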